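(* Let $M=\mathrm{Mon}\langle \Sigma \mid R\rangle$ be a finitely presented monoid and let $\mathfrak{R}$ be a rewriting system for $M$ that is complete and cyclically complete. Let $u,v\in\Sigma^*$. (i) If $u$ and $v$ are transposed, then $\rho(u)\simeq\rho(v)$. (ii) If $\rho(u)\simeq\rho(v)$, then $u\equiv_M v$.
   Context: $\Sigma^*$ is the free monoid on the alphabet $\Sigma$; $=_M$ is equality in $M$. A rewriting system $\mathfrak{R}$ is a set of rules $l\to r$ with $l,r\in\Sigma^*$; $plq\to prq$ is one rewriting step. $\mathfrak{R}$ is complete for $M$ if it is terminating, confluent, and the congruence it generates on $\Sigma^*$ is $=_M$. $u\simeq v$ means $u=ab$, $v=ba$ for some words $a,b$ (cyclic conjugates in $\Sigma^*$). $u\rightsquigarrow v$ means some cyclic conjugate $\tilde u$ of $u$ (possibly $u$) satisfies $\tilde u\to v$; $\rightsquigarrow^*$ is its reflexive–transitive closure. $\mathfrak{R}$ is cyclically terminating if there is no infinite sequence $u_1\rightsquigarrow u_2\rightsquigarrow\cdots$; cyclically confluent if whenever $w\rightsquigarrow^* u$ and $w\rightsquigarrow^* v$ there exist $z\simeq z'$ with $u\rightsquigarrow^* z$ and $v\rightsquigarrow^* z'$; cyclically complete if both. A word is cyclically irreducible if it and all its cyclic conjugates are irreducible modulo $\mathfrak{R}$. $\rho(u)$ denotes the cyclically irreducible form of $u$, i.e. a cyclically irreducible word $w$ with $u\rightsquigarrow^* w$ (unique up to $\simeq$ when $\mathfrak{R}$ is cyclically complete). Words $u,v$ are transposed if there exist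 $x,y\in\Sigma^*$ with $u=_M xy$ and $v=_M yx$. $u\equiv_M v$ means there exist $x,y\in\Sigma^*$ with $ux=_M xv$ and $yu=_M vy$. *)

theory Defs
  imports Main
begin

definition rstep :: "('a list \<times> 'a list) set \<Rightarrow> 'a list \<Rightarrow> 'a list \<Rightarrow> bool" where
  "rstep Rs u v \<longleftrightarrow> (\<exists>p q l r. (l, r) \<in> Rs \<and> u = p @ l @ q \<and> v = p @ r @ q)"

definition eqM :: "('a list \<times> 'a list) set \<Rightarrow> 'a list \<Rightarrow> 'a list \<Rightarrow> bool" where
  "eqM R u v \<longleftrightarrow> equivclp (rstep R) u v"

definition terminating :: "('a list \<times> 'a list) set \<Rightarrow> bool" where
  "terminating Rs \<longleftrightarrow> wfP (\<lambda>v u. rstep Rs u v)"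

definition confluent :: "('a list \<times> 'a list) set \<Rightarrow> bool" where
  "confluent Rs \<longleftrightarrow> (\<forall>w u v. (rstep Rs)\<^sup>*\<^sup>* w u \<and> (rstep Rs)\<^sup>*\<^sup>* w v \<longrightarrow>
     (\<exists>z. (rstep Rs)\<^sup>*\<^sup>* u z \<and> (rstep Rs)\<^sup>*\<^sup>* v z))"

definition complete_for :: "('a list \<times> 'a list) set \<Rightarrow> ('a list \<times> 'a list) set \<Rightarrow> bool" where
  "complete_for Rs R \<longleftrightarrow> terminating Rs \<and> confluent Rs \<and>
     (\<forall>u v. equivclp (rstep Rs) u v \<longleftrightarrow> eqM R u v)"

definition cconj :: "'a list \<Rightarrow> 'a list \<Rightarrow> bool" where
  "cconj u v \<longleftrightarrow> (\<exists>a b. u = a @ b \<and> v = b @ a)"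

definition cstep :: "('a list \<times> 'a list) set \<Rightarrow> 'a list \<Rightarrow> 'a list \<Rightarrow> bool" where
  "cstep Rs u v \<longleftrightarrow> (\<exists>u'. cconj u u' \<and> rstep Rs u' v)"

definition cyc_terminating :: "('a list \<times> 'a list) set \<Rightarrow> bool" where
  "cyc_terminating Rs \<longleftrightarrow> wfP (\<lambda>v u. cstep Rs u v)"

definition cyc_confluent :: "('a list \<times> 'a list) set \<Rightarrow> bool" where
  "cyc_confluent Rs \<longleftrightarrow> (\<forall>w u v. (cstep Rs)\<^sup>*\<^sup>* w u \<and> (cstep Rs)\<^sup>*\<^sup>* w v \<longrightarrow>
     (\<exists>z z'. cconj z z' \<and> (cstep Rs)\<^sup>*\<^sup>* u z \<and> (cstep Rs)\<^sup>*\<^sup>* v z'))"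

definition cyc_complete :: "('a list \<times> 'a list) set \<Rightarrow> bool" where
  "cyc_complete Rs \<longleftrightarrow> cyc_terminating Rs \<and> cyc_confluent Rs"

definition irreducible :: "('a list \<times> 'a list) set \<Rightarrow> 'a list \<Rightarrow> bool" where
  "irreducible Rs w \<longleftrightarrow> \<not> (\<exists>v. rstep Rs w v)"

definition cyc_irreducible :: "('a list \<times> 'a list) set \<Rightarrow> 'a list \<Rightarrow> bool" where
  "cyc_irreducible Rs w \<longleftrightarrow> (\<forall>w'. cconj w w' \<longrightarrow> irreducible Rs w')"

definition rho :: "('a list \<times> 'a list) set \<Rightarrow> 'a list \<Rightarrow> 'a list" where
  "rho Rs u = (SOME w. cyc_irreducible Rs w \<and> (cstep Rs)\<^sup>*\<^sup>* u w)"

definition transposed :: "('a list \<times> 'a list) set \<Rightarrow> 'a list \<Rightarrow> 'a list \<Rightarrow> bool" where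
  "transposed R u v \<longleftrightarrow> (\<exists>x y. eqM R u (x @ y) \<and> eqM R v (y @ x))"

definition equivM :: "('a list \<times> 'a list) set \<Rightarrow> 'a list \<Rightarrow> 'a list \<Rightarrow> bool" where
  "equivM R u v \<longleftrightarrow> (\<exists>x y. eqM R (u @ x) (x @ v) \<and> eqM R (y @ u) (v @ y))"

end

theory Submission
  imports Defs
begin

lemma cconj_refl: "cconj u u"
  unfolding cconj_def by (rule exI[of _ "[]"]) simp

lemma cconj_sym: "cconj u v \<Longrightarrow> cconj v u"
  unfolding cconj_def by blast

lemma cconj_trans: assumes "cconj u v" "cconj v w" shows "cconj u w"
proof -
  obtain a b where ab: "u = a @ b" "v = b @ a" using assms(1) unfolding cconj_def by blast
  obtain c d where cd: "v = c @ d" "w = d @ c" using assms(2) unfolding cconj_def by blast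
  from ab cd have "b @ a = c @ d" by simp
  then obtain e where "(b = c @ e \<and> e @ a = d) \<or> (b @ e = c \<and> a = e @ d)"
    by (auto simp: append_eq_append_conv2)
  then show ?thesis
  proof
    assume h: "b = c @ e \<and> e @ a = d"
    show ?thesis unfolding cconj_def
      by (rule exI[of _ "a @ c"], rule exI[of _ e]) (use h ab cd in simp)
  next
    assume h: "b @ e = c \<and> a = e @ d"
    show ?thesis unfolding cconj_def
      by (rule exI[of _ e], rule exI[of _ "d @ b"]) (use h ab cd in simp)
  qed
qed

lemma cstep_cconj: "cconj u v \<Longrightarrow> cstep Rs u t \<Longrightarrow> cstep Rs v t"
  unfolding cstep_def by (blast intro: cconj_trans cconj_sym)

lemma rstep_cstep: "rstep Rs u t \<Longrightarrow> cstep Rs u t"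
  unfolding cstep_def using cconj_refl by blast

lemma rsteps_csteps: "(rstep Rs)\<^sup>*\<^sup>* u t \<Longrightarrow> (cstep Rs)\<^sup>*\<^sup>* u t"
  by (induction rule: rtranclp_induct) (auto intro: rtranclp.rtrancl_into_rtrancl rstep_cstep)

lemma normal_cyc_irr: "\<not> (\<exists>t. cstep Rs u t) \<Longrightarrow> cyc_irreducible Rs u"
  unfolding cyc_irreducible_def irreducible_def cstep_def by blast

lemma cyc_irr_normal: "cyc_irreducible Rs u \<Longrightarrow> \<not> cstep Rs u t"
  unfolding cyc_irreducible_def irreducible_def cstep_def by blast

lemma rho_exists:
  assumes "cyc_terminating Rs"
  shows "\<exists>w. cyc_irreducible Rs w \<and> (cstep Rs)\<^sup>*\<^sup>* u w"
proof -
  have wf: "wfP (\<lambda>v u. cstep Rs u v)" using assms unfolding cyc_terminating_def .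
  show ?thesis
  proof (induction u rule: wfp_induct[OF wf])
    case (1 u)
    show ?case
    proof (cases "\<exists>t. cstep Rs u t")
      case True
      then obtain t where t: "cstep Rs u t" by blast
      from 1[rule_format, OF t] obtain w where "cyc_irreducible Rs w" "(cstep Rs)\<^sup>*\<^sup>* t w" by blast
      then show ?thesis using t by (blast intro: converse_rtranclp_into_rtranclp)
    next
      case False
      then show ?thesis using normal_cyc_irr by blast
    qed
  qed
qed

lemma rho_prop:
  assumes "cyc_terminating Rs"
  shows "cyc_irreducible Rs (rho Rs u) \<and> (cstep Rs)\<^sup>*\<^sup>* u (rho Rs u)"
  unfolding rho_def using rho_exists[OF assms] by (rule someI_ex)

lemma normal_unique:
  assumes "cyc_confluent Rs" "(cstep Rs)\<^sup>*\<^sup>* u w1" "(cstep Rs)\<^sup>*\<^sup>* u w2"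
    "cyc_irreducible Rs w1" "cyc_irreducible Rs w2"
  shows "cconj w1 w2"
proof -
  obtain z z' where "cconj z z'" "(cstep Rs)\<^sup>*\<^sup>* w1 z" "(cstep Rs)\<^sup>*\<^sup>* w2 z'"
    using assms(1-3) unfolding cyc_confluent_def by blast
  moreover have "z = w1" using \<open>(cstep Rs)\<^sup>*\<^sup>* w1 z\<close> assms(4)
    by (cases rule: converse_rtranclpE) (auto dest: cyc_irr_normal)
  moreover have "z' = w2" using \<open>(cstep Rs)\<^sup>*\<^sup>* w2 z'\<close> assms(5)
    by (cases rule: converse_rtranclpE) (auto dest: cyc_irr_normal)
  ultimately show ?thesis by simp
qed

lemma rho_reach:
  assumes "cyc_complete Rs" "(cstep Rs)\<^sup>*\<^sup>* u t"
  shows "cconj (rho Rs u) (rho Rs t)"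
proof -
  have ct: "cyc_terminating Rs" and cc: "cyc_confluent Rs" using assms(1) unfolding cyc_complete_def by auto
  have "(cstep Rs)\<^sup>*\<^sup>* u (rho Rs t)" using assms(2) rho_prop[OF ct, of t] by auto
  then show ?thesis using normal_unique[OF cc] rho_prop[OF ct] by blast
qed

lemma rho_cconj:
  assumes "cyc_complete Rs" "cconj u v"
  shows "cconj (rho Rs u) (rho Rs v)"
proof -
  have ct: "cyc_terminating Rs" using assms(1) unfolding cyc_complete_def by auto
  show ?thesis
  proof (cases "\<exists>t. cstep Rs u t")
    case True
    then obtain t where t: "cstep Rs u t" by blast
    then have t2: "cstep Rs v t" using cstep_cconj assms(2) by blast
    have "cconj (rho Rs u) (rho Rs t)" using rho_reach[OF assms(1)] t by blast
    moreover have "cconj (rho Rs v) (rho Rs t)" using rho_reach[OF assms(1)] t2 by blast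
    ultimately show ?thesis by (blast intro: cconj_trans cconj_sym)
  next
    case False
    then have F2: "\<not> (\<exists>t. cstep Rs v t)" using cstep_cconj cconj_sym assms(2) by blast
    have "rho Rs u = u" using rho_prop[OF ct, of u] False
      by (auto elim: converse_rtranclpE)
    moreover have "rho Rs v = v" using rho_prop[OF ct, of v] F2
      by (auto elim: converse_rtranclpE)
    ultimately show ?thesis using assms(2) by simp
  qed
qed

lemma church_rosser:
  assumes "confluent Rs" "equivclp (rstep Rs) a b"
  shows "\<exists>z. (rstep Rs)\<^sup>*\<^sup>* a z \<and> (rstep Rs)\<^sup>*\<^sup>* b z"
  using assms(2)
proof (induction rule: equivclp_induct)
  case base then show ?case by blast
next
  case (step y z)
  then obtain w where w: "(rstep Rs)\<^sup>*\<^sup>* a w" "(rstep Rs)\<^sup>*\<^sup>* y w" by blast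
  from step(2) show ?case
  proof
    assume yz: "rstep Rs y z"
    then have "(rstep Rs)\<^sup>*\<^sup>* y z" by blast
    then obtain w' where "(rstep Rs)\<^sup>*\<^sup>* w w'" "(rstep Rs)\<^sup>*\<^sup>* z w'"
      using assms(1) w(2) unfolding confluent_def by blast
    then show ?case using w(1) by (meson rtranclp_trans)
  next
    assume "rstep Rs z y"
    then show ?case using w by (meson converse_rtranclp_into_rtranclp)
  qed
qed

lemma rho_eq:
  assumes "complete_for Rs R" "cyc_complete Rs" "eqM R u v"
  shows "cconj (rho Rs u) (rho Rs v)"
proof -
  have "equivclp (rstep Rs) u v" using assms(1,3) unfolding complete_for_def by blast
  then obtain z where z: "(rstep Rs)\<^sup>*\<^sup>* u z" "(rstep Rs)\<^sup>*\<^sup>* v z"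
    using church_rosser assms(1) unfolding complete_for_def by blast
  have "cconj (rho Rs u) (rho Rs z)" using rho_reach[OF assms(2) rsteps_csteps[OF z(1)]] .
  moreover have "cconj (rho Rs v) (rho Rs z)" using rho_reach[OF assms(2) rsteps_csteps[OF z(2)]] .
  ultimately show ?thesis by (blast intro: cconj_trans cconj_sym)
qed

lemma rstep_ctx: "rstep R p q \<Longrightarrow> rstep R (a @ p @ b) (a @ q @ b)"
  unfolding rstep_def by (metis append.assoc)

lemma eqM_ctx: "eqM R p q \<Longrightarrow> eqM R (a @ p @ b) (a @ q @ b)"
  unfolding eqM_def
proof (induction rule: equivclp_induct)
  case base then show ?case by simp
next
  case (step y z)
  then show ?case by (meson equivclp_into_equivclp rstep_ctx)
qed

lemma eqM_refl: "eqM R u u" unfolding eqM_def by simp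
lemma eqM_sym: "eqM R u v \<Longrightarrow> eqM R v u" unfolding eqM_def by (rule equivclp_sym)
lemma eqM_trans: "eqM R u v \<Longrightarrow> eqM R v w \<Longrightarrow> eqM R u w" unfolding eqM_def by (rule equivclp_trans)

lemma equivM_sym: "equivM R u v \<Longrightarrow> equivM R v u"
  unfolding equivM_def using eqM_sym by blast

lemma equivM_trans:
  assumes "equivM R u v" "equivM R v w" shows "equivM R u w"
proof -
  obtain x y where xy: "eqM R (u @ x) (x @ v)" "eqM R (y @ u) (v @ y)" using assms(1) unfolding equivM_def by blast
  obtain x' y' where xy': "eqM R (v @ x') (x' @ w)" "eqM R (y' @ v) (w @ y')" using assms(2) unfolding equivM_def by blast
  have "eqM R (u @ x @ x') (x @ v @ x')" using eqM_ctx[OF xy(1), of "[]" x'] by simp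
  moreover have "eqM R (x @ v @ x') (x @ x' @ w)" using eqM_ctx[OF xy'(1), of x "[]"] by simp
  ultimately have 1: "eqM R (u @ (x @ x')) ((x @ x') @ w)" using eqM_trans by fastforce
  have "eqM R (y' @ y @ u) (y' @ v @ y)" using eqM_ctx[OF xy(2), of y' "[]"] by simp
  moreover have "eqM R (y' @ v @ y) (w @ y' @ y)" using eqM_ctx[OF xy'(2), of "[]" y] by simp
  ultimately have 2: "eqM R ((y' @ y) @ u) (w @ (y' @ y))" using eqM_trans by fastforce
  show ?thesis unfolding equivM_def using 1 2 by blast
qed

lemma cconj_equivM: "cconj u v \<Longrightarrow> equivM R u v"
  unfolding cconj_def equivM_def
proof (elim exE conjE)
  fix a b assume "u = a @ b" "v = b @ a"
  then show "\<exists>x y. eqM R (u @ x) (x @ v) \<and> eqM R (y @ u) (v @ y)"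
    by (intro exI[of _ a] exI[of _ b]) (simp add: eqM_refl)
qed

lemma eq_equivM: "eqM R u v \<Longrightarrow> equivM R u v"
  unfolding equivM_def
  by (rule exI[of _ "[]"], rule exI[of _ "[]"]) simp

lemma cstep_equivM:
  assumes "complete_for Rs R" "cstep Rs u t" shows "equivM R u t"
proof -
  obtain u' where "cconj u u'" "rstep Rs u' t" using assms(2) unfolding cstep_def by blast
  moreover have "eqM R u' t" using assms(1) \<open>rstep Rs u' t\<close> unfolding complete_for_def by blast
  ultimately show ?thesis using cconj_equivM eq_equivM equivM_trans by blast
qed

lemma csteps_equivM:
  assumes "complete_for Rs R" "(cstep Rs)\<^sup>*\<^sup>* u t" shows "equivM R u t"
  using assms(2)
proof (induction rule: rtranclp_induct)
  case base then show ?case using cconj_equivM cconj_refl by blast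
next
  case (step y z) then show ?case using cstep_equivM[OF assms(1)] equivM_trans by blast
qed

theorem theorem3p3:
  fixes R Rs :: "('a::finite list \<times> 'a list) set" and u v :: "'a list"
  assumes "finite R"
    and "complete_for Rs R"
    and "cyc_complete Rs"
  shows "(transposed R u v \<longrightarrow> cconj (rho Rs u) (rho Rs v))
       \<and> (cconj (rho Rs u) (rho Rs v) \<longrightarrow> equivM R u v)"
proof (intro conjI impI)
  assume "transposed R u v"
  then obtain x y where xy: "eqM R u (x @ y)" "eqM R v (y @ x)" unfolding transposed_def by blast
  have "cconj (rho Rs u) (rho Rs (x @ y))" using rho_eq[OF assms(2,3) xy(1)] .
  moreover have "cconj (rho Rs v) (rho Rs (y @ x))" using rho_eq[OF assms(2,3) xy(2)] .
  moreover have "cconj (rho Rs (x @ y)) (rho Rs (y @ x))"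
    using rho_cconj[OF assms(3)] unfolding cconj_def by blast
  ultimately show "cconj (rho Rs u) (rho Rs v)" by (blast intro: cconj_trans cconj_sym)
next
  assume c: "cconj (rho Rs u) (rho Rs v)"
  have ct: "cyc_terminating Rs" using assms(3) unfolding cyc_complete_def by auto
  have "equivM R u (rho Rs u)" using csteps_equivM[OF assms(2)] rho_prop[OF ct] by blast
  moreover have "equivM R (rho Rs v) v" using csteps_equivM[OF assms(2)] rho_prop[OF ct] equivM_sym by blast
  moreover have "equivM R (rho Rs u) (rho Rs v)" using cconj_equivM c .
  ultimately show "equivM R u v" using equivM_trans by blast
qed

end
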